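(* Let $G=(V,E)$ be a finite graph with positive edge weights $(\theta_e)$, let $z>0$, let $\mathbf{y}(z)\in(0,\infty)^{\vec E}$ be the (unique) solution of $\mathbf{y}(z)=z\mathcal{R}_G(\mathbf{y}(z))$, and define for each edge $e$ with orientations $\vec e,-\vec e$ \[ x_e(z)=\frac{\theta_e y_{\vec e}(z)y_{-\vec e}(z)}{z+\theta_e y_{\vec e}(z)y_{-\vec e}(z)}. \] Then for every edge $e=(uv)\in E$, \[ \frac{x_e(z)(1-x_e(z))}{z}= \theta_e\Big(1-\sum_{e'\in \partial u}x_{e'}(z)\Big)\Big(1-\sum_{e'\in \partial v}x_{e'}(z)\Big). \]
   Context: $\vec E$ contains the two orientations $u\to v$, $v\to u$ of each edge $uv$. $\mathcal{R}_G(\mathbf{a})_{u\to v}=(1+\sum_{w\in\partial u\setminus v}\theta_{wu}a_{w\to u})^{-1}$, where $\partial u\setminus v$ is the set of neighbours of $u$ other than $v$ and empty sums are $0$; $z\mathcal{R}_G$ multiplies each component by $z$. $\partial u$ denotes the set of edges incident to $u$. *)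

theory Defs
  imports "HOL-Analysis.Analysis"
begin

text \<open>A finite simple graph on vertex set V with symmetric irreflexive adjacency relation adj.
  Oriented edges u -> v are pairs (u,v) with adj u v. Edge weights theta u v (symmetric).\<close>

definition simple_graph :: "'a set \<Rightarrow> ('a \<Rightarrow> 'a \<Rightarrow> bool) \<Rightarrow> bool" where
  "simple_graph V adj \<longleftrightarrow> finite V \<and> (\<forall>u v. adj u v \<longrightarrow> u \<in> V \<and> v \<in> V)
     \<and> (\<forall>u v. adj u v \<longrightarrow> adj v u) \<and> (\<forall>u. \<not> adj u u)"

definition nbrs :: "('a \<Rightarrow> 'a \<Rightarrow> bool) \<Rightarrow> 'a \<Rightarrow> 'a set" where
  "nbrs adj u = {w. adj u w}"

definition RG :: "('a \<Rightarrow> 'a \<Rightarrow> bool) \<Rightarrow> ('a \<Rightarrow> 'a \<Rightarrow> real) \<Rightarrow> ('a \<times> 'a \<Rightarrow> real) \<Rightarrow> 'a \<times> 'a \<Rightarrow> real" where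
  "RG adj \<theta> a = (\<lambda>(u, v). inverse (1 + (\<Sum>w \<in> nbrs adj u - {v}. \<theta> w u * a (w, u))))"

definition xe :: "('a \<Rightarrow> 'a \<Rightarrow> real) \<Rightarrow> ('a \<times> 'a \<Rightarrow> real) \<Rightarrow> real \<Rightarrow> 'a \<Rightarrow> 'a \<Rightarrow> real" where
  "xe \<theta> y z u v = \<theta> u v * y (u, v) * y (v, u) / (z + \<theta> u v * y (u, v) * y (v, u))"

end

theory Submission
  imports Defs
begin

lemma key:
  fixes V :: "'a set" and adj :: "'a \<Rightarrow> 'a \<Rightarrow> bool" and \<theta> :: "'a \<Rightarrow> 'a \<Rightarrow> real"
    and y :: "'a \<times> 'a \<Rightarrow> real" and z :: real and u w :: 'a
  assumes G: "simple_graph V adj"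
    and s1: "\<forall>a b. adj a b \<longrightarrow> \<theta> a b = \<theta> b a"
    and s2: "\<forall>a b. adj a b \<longrightarrow> \<theta> a b > 0"
    and z: "z > 0"
    and s3: "\<forall>a b. adj a b \<longrightarrow> y (a, b) > 0"
    and s4: "\<forall>a b. adj a b \<longrightarrow> y (a, b) = z * RG adj \<theta> y (a, b)"
    and e: "adj u w"
  shows "xe \<theta> y z u w = \<theta> w u * y (w, u) / (1 + (\<Sum>x \<in> nbrs adj u. \<theta> x u * y (x, u)))"
    and "z / y (u, w) = 1 + (\<Sum>x \<in> nbrs adj u. \<theta> x u * y (x, u)) - \<theta> w u * y (w, u)"
    and "(\<Sum>x \<in> nbrs adj u. \<theta> x u * y (x, u)) \<ge> 0"
proof -
  have \<theta>_sym: "\<And>a b. adj a b \<Longrightarrow> \<theta> a b = \<theta> b a" using s1 by blast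
  have \<theta>_pos: "\<And>a b. adj a b \<Longrightarrow> \<theta> a b > 0" using s2 by blast
  have y_pos: "\<And>a b. adj a b \<Longrightarrow> y (a, b) > 0" using s3 by blast
  have y_fix: "\<And>a b. adj a b \<Longrightarrow> y (a, b) = z * RG adj \<theta> y (a, b)" using s4 by blast
  define S where "S = (\<Sum>x \<in> nbrs adj u. \<theta> x u * y (x, u))"
  define p where "p = \<theta> w u * y (w, u)"
  have fin: "finite (nbrs adj u)" using G unfolding simple_graph_def nbrs_def
    by (metis (no_types, lifting) mem_Collect_eq rev_finite_subset subsetI)
  have win: "w \<in> nbrs adj u" using e by (simp add: nbrs_def)
  have nn: "\<And>x. x \<in> nbrs adj u \<Longrightarrow> \<theta> x u * y (x, u) \<ge> 0"
  proof -
    fix x assume "x \<in> nbrs adj u"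
    then have "adj u x" by (simp add: nbrs_def)
    then have "adj x u" using G by (simp add: simple_graph_def)
    then show "\<theta> x u * y (x, u) \<ge> 0" using \<theta>_pos y_pos by (simp add: less_imp_le)
  qed
  have Snn: "S \<ge> 0" unfolding S_def using nn by (simp add: sum_nonneg)
  have rem: "(\<Sum>x \<in> nbrs adj u - {w}. \<theta> x u * y (x, u)) = S - p"
    unfolding S_def p_def using fin win by (simp add: sum_diff1)
  have Dnn: "S - p \<ge> 0" unfolding rem[symmetric] using nn by (intro sum_nonneg) auto
  have yuw: "y (u, w) = z / (1 + S - p)"
    using y_fix[OF e] rem by (simp add: RG_def divide_inverse algebra_simps)
  have ypos: "y (u, w) > 0" using y_pos e by simp
  have zy: "z / y (u, w) = 1 + S - p" using yuw z Dnn y_pos[OF e] by (simp add: field_simps)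
  have ppos: "p > 0" unfolding p_def using \<theta>_pos y_pos e G by (simp add: simple_graph_def)
  have th: "\<theta> u w = \<theta> w u" using \<theta>_sym[OF e] by simp
  have "xe \<theta> y z u w = p * y (u, w) / (z + p * y (u, w))"
    unfolding xe_def p_def th by (simp add: algebra_simps)
  also have "\<dots> = p / (1 + S)"
  proof -
    have zz: "z = (1 + S - p) * y (u, w)" using zy ypos by (simp add: field_simps)
    have d: "y (u, w) + S * y (u, w) > 0" using ypos Snn by (simp add: add_pos_nonneg)
    have d2: "1 + S > 0" using Snn by simp
    have "p * y (u, w) / (z + p * y (u, w)) = p * y (u, w) / ((1 + S) * y (u, w))"
      unfolding zz by (simp add: algebra_simps)
    also have "\<dots> = p / (1 + S)" using ypos d2 by simp
    finally show ?thesis .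
  qed
  finally show "xe \<theta> y z u w = \<theta> w u * y (w, u) / (1 + (\<Sum>x \<in> nbrs adj u. \<theta> x u * y (x, u)))"
    unfolding p_def S_def .
  show "z / y (u, w) = 1 + (\<Sum>x \<in> nbrs adj u. \<theta> x u * y (x, u)) - \<theta> w u * y (w, u)"
    using zy unfolding S_def p_def .
  show "(\<Sum>x \<in> nbrs adj u. \<theta> x u * y (x, u)) \<ge> 0" using Snn unfolding S_def .
qed

theorem lemma4p16:
  fixes V :: "'a set" and adj :: "'a \<Rightarrow> 'a \<Rightarrow> bool" and \<theta> :: "'a \<Rightarrow> 'a \<Rightarrow> real"
    and y :: "'a \<times> 'a \<Rightarrow> real" and z :: real and u v :: 'a
  assumes G: "simple_graph V adj"
    and \<theta>_sym: "\<And>a b. adj a b \<Longrightarrow> \<theta> a b = \<theta> b a"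
    and \<theta>_pos: "\<And>a b. adj a b \<Longrightarrow> \<theta> a b > 0"
    and z: "z > 0"
    and y_pos: "\<And>a b. adj a b \<Longrightarrow> y (a, b) > 0"
    and y_fix: "\<And>a b. adj a b \<Longrightarrow> y (a, b) = z * RG adj \<theta> y (a, b)"
    and e: "adj u v"
  shows "xe \<theta> y z u v * (1 - xe \<theta> y z u v) / z =
         \<theta> u v * (1 - (\<Sum>w \<in> nbrs adj u. xe \<theta> y z u w)) * (1 - (\<Sum>w \<in> nbrs adj v. xe \<theta> y z v w))"
proof -
  have t1: "\<forall>a b. adj a b \<longrightarrow> \<theta> a b = \<theta> b a" using \<theta>_sym by blast
  have t2: "\<forall>a b. adj a b \<longrightarrow> \<theta> a b > 0" using \<theta>_pos by blast
  have t3: "\<forall>a b. adj a b \<longrightarrow> y (a, b) > 0" using y_pos by blast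
  have t4: "\<forall>a b. adj a b \<longrightarrow> y (a, b) = z * RG adj \<theta> y (a, b)" using y_fix by blast
  note K = key[OF G t1 t2 z t3 t4]
  define Su where "Su = (\<Sum>x \<in> nbrs adj u. \<theta> x u * y (x, u))"
  define Sv where "Sv = (\<Sum>x \<in> nbrs adj v. \<theta> x v * y (x, v))"
  have e': "adj v u" using G e by (simp add: simple_graph_def)
  have Su0: "Su \<ge> 0" using K(3)[OF e] unfolding Su_def .
  have Sv0: "Sv \<ge> 0" using K(3)[OF e'] unfolding Sv_def .
  have sumx: "(\<Sum>w \<in> nbrs adj u. xe \<theta> y z u w) = Su / (1 + Su)" if
    "Su = (\<Sum>x \<in> nbrs adj u. \<theta> x u * y (x, u))" "Su \<ge> 0" for u Su
  proof -
    have "(\<Sum>w \<in> nbrs adj u. xe \<theta> y z u w) = (\<Sum>w \<in> nbrs adj u. \<theta> w u * y (w, u) / (1 + Su))"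
    proof (rule sum.cong)
      fix w assume "w \<in> nbrs adj u"
      then have "adj u w" by (simp add: nbrs_def)
      then show "xe \<theta> y z u w = \<theta> w u * y (w, u) / (1 + Su)" using K(1) that(1) by simp
    qed simp
    also have "\<dots> = Su / (1 + Su)" unfolding that(1) by (simp add: sum_divide_distrib)
    finally show ?thesis .
  qed
  have A: "1 - (\<Sum>w \<in> nbrs adj u. xe \<theta> y z u w) = 1 / (1 + Su)"
    using sumx[OF Su_def Su0] Su0 by (simp add: field_simps)
  have B: "1 - (\<Sum>w \<in> nbrs adj v. xe \<theta> y z v w) = 1 / (1 + Sv)"
    using sumx[OF Sv_def Sv0] Sv0 by (simp add: field_simps)
  have th: "\<theta> u v = \<theta> v u" using \<theta>_sym[OF e] by simp
  have xsym: "xe \<theta> y z u v = xe \<theta> y z v u" unfolding xe_def th by (simp add: mult_ac)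
  have x1: "xe \<theta> y z u v = \<theta> v u * y (v, u) / (1 + Su)" using K(1)[OF e] unfolding Su_def .
  have x2: "xe \<theta> y z u v = \<theta> u v * y (u, v) / (1 + Sv)" using K(1)[OF e'] xsym unfolding Sv_def by simp
  have zy: "z / y (u, v) = 1 + Su - \<theta> v u * y (v, u)" using K(2)[OF e] unfolding Su_def .
  have ypos: "y (u, v) > 0" using y_pos e by simp
  have om: "1 - xe \<theta> y z u v = z / y (u, v) / (1 + Su)"
    unfolding x1 zy using Su0 by (simp add: field_simps)
  have "xe \<theta> y z u v * (1 - xe \<theta> y z u v) / z
      = (\<theta> u v * y (u, v) / (1 + Sv)) * (z / y (u, v) / (1 + Su)) / z"
    using x2 om by simp
  also have "\<dots> = \<theta> u v * (1 / (1 + Su)) * (1 / (1 + Sv))"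
  proof -
    have p1: "1 + Su \<noteq> 0" and p2: "1 + Sv \<noteq> 0" using Su0 Sv0 by auto
    have "(\<theta> u v * y (u, v) / (1 + Sv)) * (z / y (u, v) / (1 + Su)) / z
        = \<theta> u v * (y (u, v) / y (u, v)) * (z / z) / ((1 + Su) * (1 + Sv))"
      by (simp add: divide_inverse mult_ac inverse_mult_distrib)
    also have "\<dots> = \<theta> u v / ((1 + Su) * (1 + Sv))" using ypos z by simp
    finally show ?thesis by simp
  qed
  finally show ?thesis unfolding A B .
qed

end
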